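(* Let $(N,\langle\cdot,\cdot\rangle,\varphi)$ be a modified $H$-type group (see context). The metric $\langle\cdot,\cdot\rangle$ is a nilsoliton if and only if the derived algebra $[\mathfrak v,\mathfrak v]$ is contained in a single eigenspace of $\mathrm{Rc}|_{\mathfrak z}$.
   Context: Let $N$ be a 2-step nilpotent real Lie group with Lie algebra $\mathfrak n$, Lie bracket $[\cdot,\cdot]$ and center $\mathfrak z$, endowed with a left-invariant pseudo-Riemannian metric $\langle\cdot,\cdot\rangle$ for which $\mathfrak z$ is nondegenerate. Put $\mathfrak v=\mathfrak z^\perp$. For $z\in\mathfrak z$ define $j(z)\in\mathrm{End}(\mathfrak v)$ by $\langle [x,y],z\rangle=\langle y,j(z)x\rangle$ for all $x,y\in\mathfrak v$. Given a quadratic form $\varphi$ on $\mathfrak z$, $(N,\langle\cdot,\cdot\rangle,\varphi)$ is a modified $H$-type group if $j(z)^2=-\varphi(z)\,\mathrm{Id}_{\mathfrak v}$ for all $z\in\mathfrak z$. The Ricci operator $\mathrm{Rc}:\mathfrak n\to\mathfrak n$ is defined by $\langle\mathrm{Rc}\,u,w\rangle=\mathrm{Ric}(u,w)$; it maps $\mathfrak z$ to $\mathfrak z$. The metric is a nilsoliton if there is a constant $c\in\mathbb R$ such that $D=\mathrm{Rc}+c\,\mathrm{Id}_{\mathfrak n}$ is a derivation of $\mathfrak n$, i.e. $D[u,w]=[Du,w]+[u,Dw]$ for all $u,w\in\mathfrak n$. *)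

theory Defs
  imports "HOL-Analysis.Analysis"
begin

text \<open>The Lie algebra n is modelled as a finite-dimensional real vector space 'a
(class euclidean_space; its inner product is only used to compute traces), with a
bracket br and a (pseudo-Riemannian) inner product g, both bilinear.\<close>

definition lie_algebra :: "('a::real_vector \<Rightarrow> 'a \<Rightarrow> 'a) \<Rightarrow> bool" where
  "lie_algebra br \<longleftrightarrow> bilinear br \<and> (\<forall>x. br x x = 0) \<and>
     (\<forall>x y z. br x (br y z) + br y (br z x) + br z (br x y) = 0)"

definition two_step_nilpotent :: "('a::real_vector \<Rightarrow> 'a \<Rightarrow> 'a) \<Rightarrow> bool" where
  "two_step_nilpotent br \<longleftrightarrow> lie_algebra br \<and> (\<forall>x y z. br (br x y) z = 0) \<and>
     (\<exists>x y. br x y \<noteq> 0)"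

definition pseudo_metric :: "('a::real_vector \<Rightarrow> 'a \<Rightarrow> real) \<Rightarrow> bool" where
  "pseudo_metric g \<longleftrightarrow> bilinear g \<and> (\<forall>x y. g x y = g y x) \<and>
     (\<forall>x. (\<forall>y. g x y = 0) \<longrightarrow> x = 0)"

definition center :: "('a::real_vector \<Rightarrow> 'a \<Rightarrow> 'a) \<Rightarrow> 'a set" where
  "center br = {x. \<forall>y. br x y = 0}"

definition orth_compl :: "('a \<Rightarrow> 'a \<Rightarrow> real) \<Rightarrow> 'a set \<Rightarrow> 'a set" where
  "orth_compl g S = {x. \<forall>z\<in>S. g x z = 0}"

text \<open>Levi-Civita connection of the left-invariant metric (Koszul formula).\<close>
definition levi_civita :: "('a \<Rightarrow> 'a \<Rightarrow> real) \<Rightarrow> ('a \<Rightarrow> 'a \<Rightarrow> 'a) \<Rightarrow> 'a \<Rightarrow> 'a \<Rightarrow> 'a" where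
  "levi_civita g br x y =
     (THE w. \<forall>z. g w z = (g (br x y) z - g (br y z) x + g (br z x) y) / 2)"

definition curvature :: "('a \<Rightarrow> 'a \<Rightarrow> real) \<Rightarrow> ('a::real_vector \<Rightarrow> 'a \<Rightarrow> 'a) \<Rightarrow> 'a \<Rightarrow> 'a \<Rightarrow> 'a \<Rightarrow> 'a" where
  "curvature g br x y w =
     levi_civita g br x (levi_civita g br y w) - levi_civita g br y (levi_civita g br x w)
     - levi_civita g br (br x y) w"

definition trace_op :: "('a::euclidean_space \<Rightarrow> 'a) \<Rightarrow> real" where
  "trace_op T = (\<Sum>b\<in>Basis. T b \<bullet> b)"

definition ricci :: "('a::euclidean_space \<Rightarrow> 'a \<Rightarrow> real) \<Rightarrow> ('a \<Rightarrow> 'a \<Rightarrow> 'a) \<Rightarrow> 'a \<Rightarrow> 'a \<Rightarrow> real" where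
  "ricci g br u w = trace_op (\<lambda>x. curvature g br x u w)"

definition ricci_op :: "('a::euclidean_space \<Rightarrow> 'a \<Rightarrow> real) \<Rightarrow> ('a \<Rightarrow> 'a \<Rightarrow> 'a) \<Rightarrow> 'a \<Rightarrow> 'a" where
  "ricci_op g br u = (THE r. \<forall>w. g r w = ricci g br u w)"

definition jmap :: "('a::real_vector \<Rightarrow> 'a \<Rightarrow> real) \<Rightarrow> ('a \<Rightarrow> 'a \<Rightarrow> 'a) \<Rightarrow> 'a \<Rightarrow> 'a \<Rightarrow> 'a" where
  "jmap g br z x = (THE w. w \<in> orth_compl g (center br) \<and>
      (\<forall>y\<in>orth_compl g (center br). g y w = g (br x y) z))"

definition quadratic_form_on :: "'a set \<Rightarrow> ('a::real_vector \<Rightarrow> real) \<Rightarrow> bool" where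
  "quadratic_form_on S phi \<longleftrightarrow>
     (\<exists>B. bilinear B \<and> (\<forall>x y. B x y = B y x) \<and> (\<forall>z\<in>S. phi z = B z z))"

definition modified_H_type ::
  "('a::real_vector \<Rightarrow> 'a \<Rightarrow> real) \<Rightarrow> ('a \<Rightarrow> 'a \<Rightarrow> 'a) \<Rightarrow> ('a \<Rightarrow> real) \<Rightarrow> bool" where
  "modified_H_type g br phi \<longleftrightarrow>
     two_step_nilpotent br \<and> pseudo_metric g \<and>
     (\<forall>x\<in>center br. (\<forall>y\<in>center br. g x y = 0) \<longrightarrow> x = 0) \<and>
     quadratic_form_on (center br) phi \<and>
     (\<forall>z\<in>center br. \<forall>x\<in>orth_compl g (center br).
        jmap g br z (jmap g br z x) = - (phi z) *\<^sub>R x)"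

definition is_derivation :: "('a::real_vector \<Rightarrow> 'a \<Rightarrow> 'a) \<Rightarrow> ('a \<Rightarrow> 'a) \<Rightarrow> bool" where
  "is_derivation br D \<longleftrightarrow> linear D \<and> (\<forall>u w. D (br u w) = br (D u) w + br u (D w))"

definition nilsoliton :: "('a::euclidean_space \<Rightarrow> 'a \<Rightarrow> real) \<Rightarrow> ('a \<Rightarrow> 'a \<Rightarrow> 'a) \<Rightarrow> bool" where
  "nilsoliton g br \<longleftrightarrow> (\<exists>c. is_derivation br (\<lambda>u. ricci_op g br u + c *\<^sub>R u))"

definition derived_subspace :: "('a::real_vector \<Rightarrow> 'a \<Rightarrow> 'a) \<Rightarrow> 'a set \<Rightarrow> 'a set" where
  "derived_subspace br S = span {br x y | x y. x \<in> S \<and> y \<in> S}"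

end

theory Submission
  imports Defs
begin

lemma lin_vanish_span:
  fixes m :: "'a::euclidean_space \<Rightarrow> real"
  assumes "linear m" "\<forall>c\<in>C. m c = 0" "x \<in> span C"
  shows "m x = 0"
  using linear_eq_on_span[of m "\<lambda>_. 0" C x] assms by (simp add: linear_zero)

lemma rep_lemma:
  fixes g :: "'a::euclidean_space \<Rightarrow> 'a \<Rightarrow> real" and l :: "'a \<Rightarrow> real"
  assumes bg: "bilinear g" and S: "subspace S"
    and nd: "\<forall>x\<in>S. (\<forall>y\<in>S. g x y = 0) \<longrightarrow> x = 0" and l: "linear l"
  shows "\<exists>z\<in>S. \<forall>c\<in>S. g z c = l c"
proof -
  obtain C where C: "C \<subseteq> S" "independent C" "S \<subseteq> span C" "card C = dim S"
    by (rule basis_exists)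
  have fin: "finite C" using C(2) by (rule finiteI_independent)
  have spanC: "span C = S"
    using span_minimal[OF C(1) S] C(3) by auto
  have coef: "\<And>a. (\<Sum>c\<in>C. a c *\<^sub>R c) = 0 \<Longrightarrow> \<forall>c\<in>C. a c = 0"
    using C(2) independent_explicit by blast
  define f where "f u = (\<Sum>c\<in>C. g u c *\<^sub>R c)" for u
  have lg: "linear (\<lambda>y. g y c)" for c using bg unfolding bilinear_def by blast
  have lg2: "linear (\<lambda>y. g c y)" for c using bg unfolding bilinear_def by blast
  have lin: "linear f"
    by (rule linearI) (simp_all add: f_def bilinear_ladd[OF bg] bilinear_lmul[OF bg]
        scaleR_add_left sum.distrib scaleR_sum_right)
  have fsub: "f u - f w = (\<Sum>c\<in>C. (g u c - g w c) *\<^sub>R c)" for u w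
    by (simp add: f_def scaleR_diff_left sum_subtractf)
  have inS: "f u \<in> S" for u
  proof -
    have "f u \<in> span C" unfolding f_def by (intro span_sum span_scale) (simp add: span_base)
    thus ?thesis using spanC by simp
  qed
  have inj: "inj_on f S"
  proof (rule inj_onI)
    fix x y assume xy: "x \<in> S" "y \<in> S" "f x = f y"
    have "\<forall>c\<in>C. g x c - g y c = 0" using coef[of "\<lambda>c. g x c - g y c"] fsub[of x y] xy(3) by simp
    hence "\<forall>c\<in>C. g (x - y) c = 0" by (simp add: bilinear_lsub[OF bg])
    hence "\<forall>c\<in>S. g (x - y) c = 0"
      using lin_vanish_span[OF lg2[of "x-y"]] spanC by blast
    moreover have "x - y \<in> S" using xy S subspace_diff by blast
    ultimately show "x = y" using nd by auto
  qed
  have "dim (f ` S) = dim S"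
  proof -
    have sp: "span S = S" using S by (simp add: span_eq_iff)
    show ?thesis using dim_image_eq[OF lin, of S] inj sp by metis
  qed
  hence fS: "f ` S = S"
    using subspace_dim_equal[of "f ` S" S] linear_subspace_image[OF lin S] S inS by auto
  define t where "t = (\<Sum>c\<in>C. l c *\<^sub>R c)"
  have "t \<in> span C" unfolding t_def by (intro span_sum span_scale) (simp add: span_base)
  hence "t \<in> S" using spanC by simp
  then obtain z where z: "z \<in> S" "f z = t" using fS by (metis imageE)
  have "(\<Sum>c\<in>C. (g z c - l c) *\<^sub>R c) = 0"
    using z(2) unfolding f_def t_def by (simp add: scaleR_diff_left sum_subtractf)
  hence "\<forall>c\<in>C. g z c - l c = 0" by (rule coef)
  moreover have "linear (\<lambda>c. g z c - l c)" using lg2 l by (simp add: linear_compose_sub)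
  ultimately have "\<forall>c\<in>S. g z c - l c = 0" using lin_vanish_span spanC by blast
  thus ?thesis using z(1) by auto
qed

lemma bilinearI':
  assumes "\<And>x y z. h (x + y) z = h x z + h y z" "\<And>a x y. h (a *\<^sub>R x) y = a *\<^sub>R h x y"
    "\<And>x y z. h x (y + z) = h x y + h x z" "\<And>a x y. h x (a *\<^sub>R y) = a *\<^sub>R h x y"
  shows "bilinear h"
  unfolding bilinear_def using assms by (auto intro!: linearI)

locale mh =
  fixes g :: "'a::euclidean_space \<Rightarrow> 'a \<Rightarrow> real" and br :: "'a \<Rightarrow> 'a \<Rightarrow> 'a"
    and phi :: "'a \<Rightarrow> real"
  assumes H: "modified_H_type g br phi"
begin

abbreviation "Z \<equiv> center br"
abbreviation "V \<equiv> orth_compl g Z"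
abbreviation "J \<equiv> jmap g br"

lemma bbr: "bilinear br" and alt: "br x x = 0" and nil: "br (br x y) w = 0"
  using H unfolding modified_H_type_def two_step_nilpotent_def lie_algebra_def by auto

lemma bg: "bilinear g" and gsym: "g x y = g y x" and gnd: "(\<And>y. g x y = 0) \<Longrightarrow> x = 0"
  using H unfolding modified_H_type_def pseudo_metric_def by auto

lemma Znd: "x \<in> Z \<Longrightarrow> (\<And>y. y \<in> Z \<Longrightarrow> g x y = 0) \<Longrightarrow> x = 0"
  using H unfolding modified_H_type_def by auto

lemma HJ: "z \<in> Z \<Longrightarrow> x \<in> V \<Longrightarrow> J z (J z x) = - (phi z) *\<^sub>R x"
  using H unfolding modified_H_type_def by auto

lemma qf: "quadratic_form_on Z phi"
  using H unfolding modified_H_type_def by auto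

lemma br_addL: "br (x + y) w = br x w + br y w" using bilinear_ladd[OF bbr] .
lemma br_addR: "br w (x + y) = br w x + br w y" using bilinear_radd[OF bbr] .
lemma br_scL: "br (a *\<^sub>R x) w = a *\<^sub>R br x w" using bilinear_lmul[OF bbr] .
lemma br_scR: "br w (a *\<^sub>R x) = a *\<^sub>R br w x" using bilinear_rmul[OF bbr] .
lemma br_subL: "br (x - y) w = br x w - br y w" using bilinear_lsub[OF bbr] .
lemma br_subR: "br w (x - y) = br w x - br w y" using bilinear_rsub[OF bbr] .
lemma br_0L: "br 0 w = 0" using bilinear_lzero[OF bbr] .
lemma br_0R: "br w 0 = 0" using bilinear_rzero[OF bbr] .
lemma g_addL: "g (x + y) w = g x w + g y w" using bilinear_ladd[OF bg] .
lemma g_addR: "g w (x + y) = g w x + g w y" using bilinear_radd[OF bg] .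
lemma g_scL: "g (a *\<^sub>R x) w = a * g x w" using bilinear_lmul[OF bg] by simp
lemma g_scR: "g w (a *\<^sub>R x) = a * g w x" using bilinear_rmul[OF bg] by simp
lemma g_subL: "g (x - y) w = g x w - g y w" using bilinear_lsub[OF bg] .
lemma g_subR: "g w (x - y) = g w x - g w y" using bilinear_rsub[OF bg] .
lemma g_negL: "g (- x) w = - g x w" using bilinear_lneg[OF bg] .
lemma g_negR: "g w (- x) = - g w x" using bilinear_rneg[OF bg] .
lemma g_0L: "g 0 w = 0" using bilinear_lzero[OF bg] .
lemma g_0R: "g w 0 = 0" using bilinear_rzero[OF bg] .
lemma br_negL: "br (- x) w = - br x w" using bilinear_lneg[OF bbr] .
lemma br_negR: "br w (- x) = - br w x" using bilinear_rneg[OF bbr] .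

lemmas lin_simps = br_addL br_addR br_scL br_scR br_subL br_subR br_0L br_0R br_negL br_negR
  g_addL g_addR g_scL g_scR g_subL g_subR g_negL g_negR g_0L g_0R

lemma lin_gL: "linear (\<lambda>x. g x w)" using bg unfolding bilinear_def by blast
lemma lin_gR: "linear (\<lambda>x. g w x)" using bg unfolding bilinear_def by blast
lemma lin_brR: "linear (\<lambda>x. br w x)" using bbr unfolding bilinear_def by blast

lemma g_sumL: "g (sum f A) w = (\<Sum>a\<in>A. g (f a) w)"
  using linear_sum[OF lin_gL] by blast
lemma g_sumR: "g w (sum f A) = (\<Sum>a\<in>A. g w (f a))"
  using linear_sum[OF lin_gR] by blast

lemma anti: "br x y = - br y x"
proof -
  have "br (x + y) (x + y) = br x x + br x y + (br y x + br y y)"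
    by (simp only: br_addL br_addR add_ac)
  hence "0 = br x y + br y x" by (simp add: alt)
  then show ?thesis by (metis add.commute add_eq_0_iff)
qed

lemma br_Z: "br x y \<in> Z" unfolding center_def by (simp add: nil)
lemma Z_brL: "c \<in> Z \<Longrightarrow> br c y = 0" unfolding center_def by simp
lemma Z_brR: "c \<in> Z \<Longrightarrow> br y c = 0" using anti Z_brL by (metis neg_equal_0_iff_equal)

lemma subZ: "subspace Z"
  unfolding subspace_def center_def by (simp add: lin_simps)
lemma subV: "subspace V"
  unfolding subspace_def orth_compl_def by (simp add: lin_simps)

lemma gVZ: "v \<in> V \<Longrightarrow> c \<in> Z \<Longrightarrow> g v c = 0"
  unfolding orth_compl_def by auto
lemma gZV: "v \<in> V \<Longrightarrow> c \<in> Z \<Longrightarrow> g c v = 0"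
  using gVZ gsym by metis

lemma Q_ex: "\<exists>z. z \<in> Z \<and> (\<forall>c\<in>Z. g z c = g u c)"
  using rep_lemma[OF bg subZ _ lin_gR[of u]] Znd by blast

definition Q where "Q u = (SOME z. z \<in> Z \<and> (\<forall>c\<in>Z. g z c = g u c))"
definition P where "P u = u - Q u"

lemma Q_Z: "Q u \<in> Z" and Q_g: "c \<in> Z \<Longrightarrow> g (Q u) c = g u c"
  using someI_ex[OF Q_ex[of u]] unfolding Q_def by auto

lemma Q_unique: "z \<in> Z \<Longrightarrow> (\<And>c. c \<in> Z \<Longrightarrow> g z c = g u c) \<Longrightarrow> Q u = z"
proof -
  assume z: "z \<in> Z" "\<And>c. c \<in> Z \<Longrightarrow> g z c = g u c"
  have "Q u - z \<in> Z" using Q_Z z subZ subspace_diff by blast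
  moreover have "\<And>c. c \<in> Z \<Longrightarrow> g (Q u - z) c = 0" using Q_g z by (simp add: g_subL)
  ultimately have "Q u - z = 0" using Znd by blast
  thus ?thesis by simp
qed

lemma P_V: "P u \<in> V"
  unfolding P_def orth_compl_def using Q_g by (simp add: g_subL)

lemma PQ: "P u + Q u = u" unfolding P_def by simp

lemma Q_add: "Q (x + y) = Q x + Q y"
  by (rule Q_unique) (auto simp: Q_Z subZ subspace_add g_addL Q_g)
lemma Q_sc: "Q (a *\<^sub>R x) = a *\<^sub>R Q x"
  by (rule Q_unique) (auto simp: Q_Z subZ subspace_scale g_scL Q_g)
lemma lin_Q: "linear Q" by (rule linearI) (simp_all add: Q_add Q_sc)
lemma lin_P: "linear P" unfolding P_def[abs_def] by (rule linear_compose_sub[OF linear_id[unfolded id_def] lin_Q])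

lemma Q_of_Z: "c \<in> Z \<Longrightarrow> Q c = c" by (rule Q_unique) auto
lemma Q_of_V: "v \<in> V \<Longrightarrow> Q v = 0"
  by (rule Q_unique) (auto simp: subZ subspace_0 gVZ g_0L)
lemma P_of_V: "v \<in> V \<Longrightarrow> P v = v" by (simp add: P_def Q_of_V)
lemma P_of_Z: "c \<in> Z \<Longrightarrow> P c = 0" by (simp add: P_def Q_of_Z)
lemma QQ: "Q (Q u) = Q u" by (simp add: Q_of_Z Q_Z)
lemma QP: "Q (P u) = 0" by (simp add: Q_of_V P_V)
lemma PP: "P (P u) = P u" by (simp add: P_of_V P_V)

lemma g_PQ: "g u w = g (P u) (P w) + g (Q u) (Q w)"
proof -
  have "g u w = g (P u + Q u) (P w + Q w)" by (simp add: PQ)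
  also have "\<dots> = g (P u) (P w) + g (P u) (Q w) + g (Q u) (P w) + g (Q u) (Q w)"
    by (simp add: g_addL g_addR)
  finally show ?thesis by (simp add: gVZ gZV P_V Q_Z)
qed

lemma g_V_left: "v \<in> V \<Longrightarrow> g v w = g v (P w)"
  using g_PQ[of v w] by (simp add: P_of_V Q_of_V g_0L)
lemma g_Z_left: "c \<in> Z \<Longrightarrow> g c w = g c (Q w)"
  using g_PQ[of c w] by (simp add: P_of_Z Q_of_Z g_0L)
lemma g_P_swap: "g (P u) w = g u (P w)"
  using g_PQ[of "P u" w] g_PQ[of u "P w"] by (simp add: PP QP g_0L g_0R)

lemma V_nd: "x \<in> V \<Longrightarrow> (\<And>y. y \<in> V \<Longrightarrow> g x y = 0) \<Longrightarrow> x = 0"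
proof -
  assume x: "x \<in> V" "\<And>y. y \<in> V \<Longrightarrow> g x y = 0"
  have "g x y = 0" for y using g_V_left[OF x(1), of y] x(2)[OF P_V] by simp
  thus ?thesis using gnd by blast
qed

lemma br_P: "br x y = br (P x) (P y)"
proof -
  have "br x y = br (P x + Q x) (P y + Q y)" by (simp add: PQ)
  thus ?thesis by (simp add: br_addL br_addR Z_brL Z_brR Q_Z)
qed

lemma J_ex: "\<exists>r. r \<in> V \<and> (\<forall>y. g y r = g (br x y) c)"
proof -
  have l: "linear (\<lambda>y. g (br x y) c)"
    using linear_compose[OF lin_brR lin_gL] by (simp add: o_def)
  obtain r where r: "\<forall>y. g r y = g (br x y) c"
    using rep_lemma[OF bg subspace_UNIV _ l] gnd by blast
  have "r \<in> V" unfolding orth_compl_def using r Z_brR by (auto simp: g_0L)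
  thus ?thesis using r gsym by metis
qed

lemma J_char: "J c x \<in> V \<and> (\<forall>y. g y (J c x) = g (br x y) c)"
proof -
  obtain r where r: "r \<in> V" "\<forall>y. g y r = g (br x y) c" using J_ex by blast
  have "J c x = r" unfolding jmap_def
  proof (rule the_equality)
    show "r \<in> V \<and> (\<forall>y\<in>V. g y r = g (br x y) c)" using r by auto
    fix w assume w: "w \<in> V \<and> (\<forall>y\<in>V. g y w = g (br x y) c)"
    have "w - r \<in> V" using w r subV subspace_diff by blast
    moreover have "g (w - r) y = 0" if y: "y \<in> V" for y
    proof -
      have "g y w = g y r" using w r y by auto
      thus ?thesis by (simp add: g_subL gsym[of w y] gsym[of r y])
    qed
    ultimately show "w = r" using V_nd by fastforce
  qed
  thus ?thesis using r by simp
qed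

lemma J_V: "J c x \<in> V" using J_char by blast
lemma J_g: "g y (J c x) = g (br x y) c" using J_char by blast

lemma J_unique: "(\<And>y. g y w = g (br x y) c) \<Longrightarrow> J c x = w"
proof -
  assume w: "\<And>y. g y w = g (br x y) c"
  have "g (J c x - w) y = 0" for y
    using w[of y] J_g[of y c x] gsym[of "J c x" y] gsym[of w y] by (simp add: g_subL)
  thus ?thesis using gnd by (metis eq_iff_diff_eq_0)
qed

lemma J_addL: "J (c + d) x = J c x + J d x"
  by (rule J_unique) (simp add: g_addR g_addL J_g)
lemma J_scL: "J (a *\<^sub>R c) x = a *\<^sub>R J c x"
  by (rule J_unique) (simp add: g_scR g_scL J_g)
lemma J_addR: "J c (x + y) = J c x + J c y"
  by (rule J_unique) (simp add: g_addR g_addL J_g br_addL)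
lemma J_scR: "J c (a *\<^sub>R x) = a *\<^sub>R J c x"
  by (rule J_unique) (simp add: g_scR g_scL J_g br_scL)
lemma bJ: "bilinear J"
  by (rule bilinearI') (simp_all add: J_addL J_scL J_addR J_scR)
lemma J_subL: "J (c - d) x = J c x - J d x" using bilinear_lsub[OF bJ] .
lemma J_subR: "J c (x - y) = J c x - J c y" using bilinear_rsub[OF bJ] .
lemma J_negL: "J (- c) x = - J c x" using bilinear_lneg[OF bJ] .
lemma J_negR: "J c (- x) = - J c x" using bilinear_rneg[OF bJ] .
lemma J_0L: "J 0 x = 0" using bilinear_lzero[OF bJ] .
lemma J_0R: "J c 0 = 0" using bilinear_rzero[OF bJ] .

lemmas J_simps = J_addL J_scL J_addR J_scR J_subL J_subR J_negL J_negR J_0L J_0R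

lemma J_Q: "J c x = J (Q c) x"
  by (rule J_unique) (metis J_g Q_g[OF br_Z] gsym)
lemma J_P: "J c x = J c (P x)"
  by (rule J_unique) (metis J_g br_P PP)
lemma J_Zarg: "x \<in> Z \<Longrightarrow> J c x = 0"
  by (rule J_unique) (simp add: Z_brL g_0L g_0R)
lemma J_Vc: "c \<in> V \<Longrightarrow> J c x = 0"
  by (rule J_unique) (simp add: g_0R gsym gVZ br_Z)
lemma J_skew: "g (J c x) y = - g x (J c y)"
  using J_g[of y c x] J_g[of x c y] anti[of x y] gsym[of "J c x" y] by (simp add: g_negL)


abbreviation "LC \<equiv> levi_civita g br"
abbreviation "R \<equiv> curvature g br"

lemma LC_eq: "LC u w = (1/2) *\<^sub>R br u w - (1/2) *\<^sub>R J w u - (1/2) *\<^sub>R J u w"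
proof -
  define r where "r = (1/2) *\<^sub>R br u w - (1/2) *\<^sub>R J w u - (1/2) *\<^sub>R J u w"
  have pr: "g r z = (g (br u w) z - g (br w z) u + g (br z u) w) / 2" for z
  proof -
    have a: "g (J w u) z = - g (br z u) w"
      using J_g[of z w u] gsym[of "J w u" z] anti[of u z] by (simp add: g_negL)
    have b: "g (J u w) z = g (br w z) u"
      using J_g[of z u w] gsym[of "J u w" z] by simp
    show ?thesis unfolding r_def by (simp add: g_subL g_scL a b)
  qed
  have "LC u w = r" unfolding levi_civita_def
  proof (rule the_equality)
    show "\<forall>z. g r z = (g (br u w) z - g (br w z) u + g (br z u) w) / 2" using pr by blast
    fix q assume q: "\<forall>z. g q z = (g (br u w) z - g (br w z) u + g (br z u) w) / 2"
    have "g (q - r) z = 0" for z using q[rule_format, of z] pr[of z] by (simp add: g_subL)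
    thus "q = r" using gnd by (metis eq_iff_diff_eq_0)
  qed
  thus ?thesis unfolding r_def .
qed

lemma bLC: "bilinear LC"
  by (rule bilinearI') (simp_all add: LC_eq lin_simps J_simps algebra_simps)

lemma zero_simps:
  "br (br a b) c = 0" "br c (br a b) = 0" "J d (br a b) = 0" "J (J a b) d = 0"
  "c \<in> Z \<Longrightarrow> br c a = 0" "c \<in> Z \<Longrightarrow> br a c = 0" "c \<in> Z \<Longrightarrow> J a c = 0"
  "v \<in> V \<Longrightarrow> J v a = 0"
  by (simp_all add: nil Z_brR br_Z J_Zarg J_Vc J_V Z_brL)

lemma R1: "x \<in> V \<Longrightarrow> y \<in> V \<Longrightarrow> R t x y =
   - (1/4) *\<^sub>R J (br x y) t + (1/4) *\<^sub>R J (br t y) x + (1/4) *\<^sub>R br x (J t y)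
   + (1/2) *\<^sub>R J (br t x) y"
  unfolding curvature_def by (simp add: LC_eq lin_simps J_simps zero_simps algebra_simps)

lemma R2: "x \<in> V \<Longrightarrow> c \<in> Z \<Longrightarrow> R t x c =
   - (1/4) *\<^sub>R br t (J c x) + (1/4) *\<^sub>R J t (J c x) + (1/4) *\<^sub>R br x (J c t)"
  unfolding curvature_def by (simp add: LC_eq lin_simps J_simps zero_simps algebra_simps)

lemma R3: "c \<in> Z \<Longrightarrow> y \<in> V \<Longrightarrow> R t c y =
   - (1/4) *\<^sub>R br t (J c y) + (1/4) *\<^sub>R J t (J c y) - (1/4) *\<^sub>R J c (J t y)"
  unfolding curvature_def by (simp add: LC_eq lin_simps J_simps zero_simps algebra_simps)


lemma F_ex: "\<exists>f. \<forall>s. g s f = s \<bullet> b"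
proof -
  have l: "linear (\<lambda>s. s \<bullet> b)" by (rule linearI) (simp_all add: inner_add_left)
  obtain z where "\<forall>c. g z c = c \<bullet> b" using rep_lemma[OF bg subspace_UNIV _ l] gnd by blast
  thus ?thesis using gsym by metis
qed

definition F where "F b = (SOME f. \<forall>s. g s f = s \<bullet> b)"

lemma F_g: "g s (F b) = s \<bullet> b"
  using someI_ex[OF F_ex[of b]] unfolding F_def by blast

definition tr2 :: "('a \<Rightarrow> 'a \<Rightarrow> real) \<Rightarrow> real" where
  "tr2 h = (\<Sum>b\<in>Basis. h b (F b))"

lemma trace_F: "trace_op T = (\<Sum>b\<in>Basis. g (T b) (F b))"
  unfolding trace_op_def by (simp add: F_g)

lemma ricci_tr: "ricci g br u w = tr2 (\<lambda>t s. g (R t u w) s)"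
  unfolding ricci_def trace_F tr2_def ..

lemma C1: "(\<Sum>b\<in>Basis. g u (F b) *\<^sub>R b) = u"
  by (simp add: F_g euclidean_representation)

lemma C2: "(\<Sum>b\<in>Basis. g u b *\<^sub>R F b) = u"
proof -
  have "g ((\<Sum>b\<in>Basis. g u b *\<^sub>R F b) - u) s = 0" for s
  proof -
    have "g (\<Sum>b\<in>Basis. g u b *\<^sub>R F b) s = (\<Sum>b\<in>Basis. g u b * (s \<bullet> b))"
      by (simp add: g_sumL g_scL gsym[of "F _" s] F_g)
    also have "\<dots> = g u (\<Sum>b\<in>Basis. (s \<bullet> b) *\<^sub>R b)"
      by (simp add: g_sumR g_scR mult.commute)
    also have "\<dots> = g u s" by (simp add: euclidean_representation)
    finally show ?thesis by (simp add: g_subL)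
  qed
  hence "(\<Sum>b\<in>Basis. g u b *\<^sub>R F b) - u = 0" by (rule gnd)
  thus ?thesis by simp
qed

lemma pair: "(\<Sum>b\<in>Basis. g u b * g (F b) w) = g u w"
proof -
  have "g u w = g (\<Sum>b\<in>Basis. g u b *\<^sub>R F b) w" by (simp add: C2)
  also have "\<dots> = (\<Sum>b\<in>Basis. g u b * g (F b) w)" by (simp add: g_sumL g_scL)
  finally show ?thesis by simp
qed

lemma hsumR: "bilinear h \<Longrightarrow> h x (\<Sum>d\<in>A. c d *\<^sub>R v d) = (\<Sum>d\<in>A. c d * h x (v d))"
  for h :: "'a \<Rightarrow> 'a \<Rightarrow> real"
proof -
  assume b: "bilinear h"
  have l: "linear (h x)" using b unfolding bilinear_def by blast
  show ?thesis by (simp add: linear_sum[OF l] linear_cmul[OF l])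
qed

lemma hsumL: "bilinear h \<Longrightarrow> h (\<Sum>d\<in>A. c d *\<^sub>R v d) x = (\<Sum>d\<in>A. c d * h (v d) x)"
  for h :: "'a \<Rightarrow> 'a \<Rightarrow> real"
proof -
  assume b: "bilinear h"
  have l: "linear (\<lambda>y. h y x)" using b unfolding bilinear_def by blast
  show ?thesis by (simp add: linear_sum[OF l] linear_cmul[OF l])
qed

lemma tr2_sym: "bilinear h \<Longrightarrow> tr2 h = tr2 (\<lambda>u w. h w u)"
  for h :: "'a \<Rightarrow> 'a \<Rightarrow> real"
proof -
  assume b: "bilinear h"
  have e1: "h b (F b) = (\<Sum>d\<in>Basis. g (F b) (F d) * h b d)" for b
  proof -
    have "h b (F b) = h b (\<Sum>d\<in>Basis. g (F b) (F d) *\<^sub>R d)" by (simp add: C1)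
    thus ?thesis by (simp only: hsumR[OF b])
  qed
  have e2: "h (F b) b = (\<Sum>d\<in>Basis. g (F b) (F d) * h d b)" for b
  proof -
    have "h (F b) b = h (\<Sum>d\<in>Basis. g (F b) (F d) *\<^sub>R d) b" by (simp add: C1)
    thus ?thesis by (simp only: hsumL[OF b])
  qed
  have "tr2 h = (\<Sum>b\<in>Basis. \<Sum>d\<in>Basis. g (F b) (F d) * h b d)"
    unfolding tr2_def using e1 by simp
  also have "\<dots> = (\<Sum>d\<in>Basis. \<Sum>b\<in>Basis. g (F d) (F b) * h b d)"
    by (subst sum.swap) (simp only: gsym[of "F _" "F _"])
  also have "\<dots> = tr2 (\<lambda>u w. h w u)"
    unfolding tr2_def using e2 by simp
  finally show ?thesis .
qed

lemma tr2_skew: "bilinear h \<Longrightarrow> (\<And>u w. h u w = - h w u) \<Longrightarrow> tr2 h = 0"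
  for h :: "'a \<Rightarrow> 'a \<Rightarrow> real"
proof -
  assume b: "bilinear h" and s: "\<And>u w. h u w = - h w u"
  have "tr2 h = tr2 (\<lambda>u w. h w u)" using tr2_sym[OF b] .
  also have "\<dots> = - tr2 h" unfolding tr2_def by (subst s) (simp add: sum_negf)
  finally show ?thesis by simp
qed

lemma g_Q_swap: "g (Q u) w = g u (Q w)"
  using g_PQ[of "Q u" w] g_PQ[of u "Q w"] by (simp add: QQ QP P_of_Z Q_Z g_0L g_0R)

lemma cross1: "bilinear h \<Longrightarrow> (\<Sum>b\<in>Basis. h (P b) (Q (F b))) = 0"
  for h :: "'a \<Rightarrow> 'a \<Rightarrow> real"
proof -
  assume b: "bilinear h"
  have lhQ: "linear (\<lambda>x. h d (Q x))" for d
    using linear_compose[OF lin_Q, of "h d"] b unfolding bilinear_def by (simp add: o_def)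
  have e: "h (P b) (Q (F b)) = (\<Sum>d\<in>Basis. g (P b) (F d) * h d (Q (F b)))" for b
  proof -
    have "h (P b) (Q (F b)) = h (\<Sum>d\<in>Basis. g (P b) (F d) *\<^sub>R d) (Q (F b))" by (simp add: C1)
    thus ?thesis by (simp only: hsumL[OF b])
  qed
  have "(\<Sum>b\<in>Basis. h (P b) (Q (F b))) = (\<Sum>d\<in>Basis. \<Sum>b\<in>Basis. g (P b) (F d) * h d (Q (F b)))"
    by (simp only: e) (rule sum.swap)
  also have "\<dots> = (\<Sum>d\<in>Basis. h d (Q (\<Sum>b\<in>Basis. g (P (F d)) b *\<^sub>R F b)))"
  proof (rule sum.cong[OF refl])
    fix d
    have "h d (Q (\<Sum>b\<in>Basis. g (P (F d)) b *\<^sub>R F b)) = (\<Sum>b\<in>Basis. g (P (F d)) b * h d (Q (F b)))"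
      by (simp add: linear_sum[OF lhQ[of d]] linear_cmul[OF lhQ[of d]])
    also have "\<dots> = (\<Sum>b\<in>Basis. g (P b) (F d) * h d (Q (F b)))"
      by (rule sum.cong[OF refl]) (metis g_P_swap gsym)
    finally show "(\<Sum>b\<in>Basis. g (P b) (F d) * h d (Q (F b))) = h d (Q (\<Sum>b\<in>Basis. g (P (F d)) b *\<^sub>R F b))" by simp
  qed
  also have "\<dots> = 0" by (simp add: C2 QP bilinear_rzero[OF b])
  finally show ?thesis .
qed

lemma cross2: "bilinear h \<Longrightarrow> (\<Sum>b\<in>Basis. h (Q b) (P (F b))) = 0"
  for h :: "'a \<Rightarrow> 'a \<Rightarrow> real"
proof -
  assume b: "bilinear h"
  have lhP: "linear (\<lambda>x. h d (P x))" for d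
    using linear_compose[OF lin_P, of "h d"] b unfolding bilinear_def by (simp add: o_def)
  have e: "h (Q b) (P (F b)) = (\<Sum>d\<in>Basis. g (Q b) (F d) * h d (P (F b)))" for b
  proof -
    have "h (Q b) (P (F b)) = h (\<Sum>d\<in>Basis. g (Q b) (F d) *\<^sub>R d) (P (F b))" by (simp add: C1)
    thus ?thesis by (simp only: hsumL[OF b])
  qed
  have "(\<Sum>b\<in>Basis. h (Q b) (P (F b))) = (\<Sum>d\<in>Basis. \<Sum>b\<in>Basis. g (Q b) (F d) * h d (P (F b)))"
    by (simp only: e) (rule sum.swap)
  also have "\<dots> = (\<Sum>d\<in>Basis. h d (P (\<Sum>b\<in>Basis. g (Q (F d)) b *\<^sub>R F b)))"
  proof (rule sum.cong[OF refl])
    fix d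
    have "h d (P (\<Sum>b\<in>Basis. g (Q (F d)) b *\<^sub>R F b)) = (\<Sum>b\<in>Basis. g (Q (F d)) b * h d (P (F b)))"
      by (simp add: linear_sum[OF lhP[of d]] linear_cmul[OF lhP[of d]])
    also have "\<dots> = (\<Sum>b\<in>Basis. g (Q b) (F d) * h d (P (F b)))"
      by (rule sum.cong[OF refl]) (metis g_Q_swap gsym)
    finally show "(\<Sum>b\<in>Basis. g (Q b) (F d) * h d (P (F b))) = h d (P (\<Sum>b\<in>Basis. g (Q (F d)) b *\<^sub>R F b))" by simp
  qed
  also have "\<dots> = 0" by (simp add: C2 P_of_Z Q_Z bilinear_rzero[OF b])
  finally show ?thesis .
qed

lemma tr2_PQ: "bilinear h \<Longrightarrow> (\<And>t s. h t s = h (P t) (Q s)) \<Longrightarrow> tr2 h = 0"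
  for h :: "'a \<Rightarrow> 'a \<Rightarrow> real"
proof -
  assume b: "bilinear h" and e: "\<And>t s. h t s = h (P t) (Q s)"
  have "tr2 h = (\<Sum>b\<in>Basis. h (P b) (Q (F b)))" unfolding tr2_def by (rule sum.cong[OF refl], rule e)
  thus ?thesis using cross1[OF b] by simp
qed
lemma tr2_QP: "bilinear h \<Longrightarrow> (\<And>t s. h t s = h (Q t) (P s)) \<Longrightarrow> tr2 h = 0"
  for h :: "'a \<Rightarrow> 'a \<Rightarrow> real"
proof -
  assume b: "bilinear h" and e: "\<And>t s. h t s = h (Q t) (P s)"
  have "tr2 h = (\<Sum>b\<in>Basis. h (Q b) (P (F b)))" unfolding tr2_def by (rule sum.cong[OF refl], rule e)
  thus ?thesis using cross2[OF b] by simp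
qed


lemma tr2_lin3: "tr2 (\<lambda>t s. a * h1 t s + b * h2 t s + c * h3 t s) = a * tr2 h1 + b * tr2 h2 + c * tr2 h3"
  unfolding tr2_def by (simp add: sum.distrib sum_distrib_left)
lemma tr2_lin4: "tr2 (\<lambda>t s. a * h1 t s + b * h2 t s + c * h3 t s + d * h4 t s)
   = a * tr2 h1 + b * tr2 h2 + c * tr2 h3 + d * tr2 h4"
  unfolding tr2_def by (simp add: sum.distrib sum_distrib_left)
lemma tr2_cong: "(\<And>t s. h t s = k t s) \<Longrightarrow> tr2 h = tr2 k"
  unfolding tr2_def by simp

lemma tr_brp: "tr2 (\<lambda>t s. g (br t p) s) = 0"
proof (rule tr2_PQ)
  show "bilinear (\<lambda>t s. g (br t p) s)" by (rule bilinearI') (simp_all add: lin_simps)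
  fix t s
  have "br t p = br (P t) p" using br_P[of t p] br_P[of "P t" p] PP[of t] by simp
  thus "g (br t p) s = g (br (P t) p) (Q s)" using g_Z_left[OF br_Z, of "P t" p s] by simp
qed

lemma tr_Jp: "tr2 (\<lambda>t s. g (J t p) s) = 0"
proof (rule tr2_QP)
  show "bilinear (\<lambda>t s. g (J t p) s)" by (rule bilinearI') (simp_all add: lin_simps J_simps)
  fix t s
  have "J t p = J (Q t) p" by (rule J_Q)
  thus "g (J t p) s = g (J (Q t) p) (P s)" using g_V_left[OF J_V, of "Q t" p s] by simp
qed

lemma tr_brJ: "tr2 (\<lambda>t s. g (br x (J c t)) s) = 0"
proof (rule tr2_PQ)
  show "bilinear (\<lambda>t s. g (br x (J c t)) s)" by (rule bilinearI') (simp_all add: lin_simps J_simps)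
  fix t s
  have "J c t = J c (P t)" by (rule J_P)
  thus "g (br x (J c t)) s = g (br x (J c (P t))) (Q s)" using g_Z_left[OF br_Z, of x "J c (P t)" s] by simp
qed

lemma tr_JJ: "tr2 (\<lambda>t s. g (J c (J t y)) s) = 0"
proof (rule tr2_QP)
  show "bilinear (\<lambda>t s. g (J c (J t y)) s)" by (rule bilinearI') (simp_all add: lin_simps J_simps)
  fix t s
  have "J t y = J (Q t) y" by (rule J_Q)
  thus "g (J c (J t y)) s = g (J c (J (Q t) y)) (P s)" using g_V_left[OF J_V, of c "J (Q t) y" s] by simp
qed

lemma ric_VZ: assumes "x \<in> V" "c \<in> Z" shows "ricci g br x c = 0"
proof -
  have "ricci g br x c = tr2 (\<lambda>t s. (- (1/4)) * g (br t (J c x)) s + (1/4) * g (J t (J c x)) s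
      + (1/4) * g (br x (J c t)) s)"
    unfolding ricci_tr using assms by (intro tr2_cong) (simp add: R2 g_addL g_subL g_scL g_negL)
  also have "\<dots> = 0" unfolding tr2_lin3 by (simp add: tr_brp tr_Jp tr_brJ)
  finally show ?thesis .
qed

lemma ric_ZV: assumes "c \<in> Z" "y \<in> V" shows "ricci g br c y = 0"
proof -
  have "ricci g br c y = tr2 (\<lambda>t s. (- (1/4)) * g (br t (J c y)) s + (1/4) * g (J t (J c y)) s
      + (- (1/4)) * g (J c (J t y)) s)"
    unfolding ricci_tr using assms by (intro tr2_cong) (simp add: R3 g_addL g_subL g_scL g_negL)
  also have "\<dots> = 0" unfolding tr2_lin3 by (simp add: tr_brp tr_Jp tr_JJ)
  finally show ?thesis .
qed

definition Bq where "Bq = (SOME B. bilinear B \<and> (\<forall>x y. B x y = B y x) \<and> (\<forall>z\<in>Z. phi z = B z z))"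

lemma Bq_props: "bilinear Bq \<and> (\<forall>x y. Bq x y = Bq y x) \<and> (\<forall>z\<in>Z. phi z = Bq z z)"
  using qf unfolding quadratic_form_on_def Bq_def by (rule someI_ex)

lemma polar: assumes y: "y \<in> V"
  shows "J u (J w y) + J w (J u y) = - (2 * Bq (Q u) (Q w)) *\<^sub>R y"
proof -
  define a where "a = Q u"
  define b where "b = Q w"
  have ab: "a \<in> Z" "b \<in> Z" "a + b \<in> Z" using Q_Z subZ subspace_add unfolding a_def b_def by blast+
  have e1: "J u (J w y) = J a (J b y)" unfolding a_def b_def using J_Q by metis
  have e2: "J w (J u y) = J b (J a y)" unfolding a_def b_def using J_Q by metis
  have e: "J (a+b) (J (a+b) y) = J a (J a y) + (J a (J b y) + J b (J a y)) + J b (J b y)"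
    by (simp add: J_simps algebra_simps)
  have bq: "bilinear Bq" "\<And>x y. Bq x y = Bq y x" "\<And>z. z \<in> Z \<Longrightarrow> phi z = Bq z z"
    using Bq_props by auto
  have ph: "phi (a + b) = phi a + 2 * Bq a b + phi b"
    using bq(3)[OF ab(3)] bq(3)[OF ab(1)] bq(3)[OF ab(2)] bq(2)[of b a]
    by (simp add: bilinear_ladd[OF bq(1)] bilinear_radd[OF bq(1)])
  have "J a (J b y) + J b (J a y) = J (a+b) (J (a+b) y) - J a (J a y) - J b (J b y)"
    using e by simp
  also have "\<dots> = - (2 * Bq a b) *\<^sub>R y"
    unfolding HJ[OF ab(3) y] HJ[OF ab(1) y] HJ[OF ab(2) y] ph by (simp add: algebra_simps)
  finally show ?thesis using e1 e2 a_def b_def by simp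
qed

definition S where "S x y = tr2 (\<lambda>u w. g (J u x) (J w y))"
definition kappa where "kappa = tr2 (\<lambda>u w. Bq (Q u) (Q w))"

lemma bil_S: "bilinear (\<lambda>u w. g (J u x) (J w y))"
  by (rule bilinearI') (simp_all add: lin_simps J_simps)

lemma S_eq: assumes y: "y \<in> V" shows "S x y = kappa * g x y"
proof -
  define K where "K u w = g x (J u (J w y))" for u w
  have bK: "bilinear K" unfolding K_def by (rule bilinearI') (simp_all add: lin_simps J_simps)
  have "tr2 K + tr2 K = tr2 K + tr2 (\<lambda>u w. K w u)" using tr2_sym[OF bK] by simp
  also have "\<dots> = (\<Sum>b\<in>Basis. g x (J b (J (F b) y) + J (F b) (J b y)))"
    unfolding tr2_def K_def by (simp add: sum.distrib g_addR)
  also have "\<dots> = (\<Sum>b\<in>Basis. - 2 * Bq (Q b) (Q (F b)) * g x y)"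
    by (simp add: polar[OF y] g_scR g_negR)
  also have "\<dots> = - 2 * kappa * g x y"
    unfolding kappa_def tr2_def by (simp add: sum_distrib_left sum_distrib_right sum_negf)
  finally have tK: "tr2 K = - kappa * g x y" by simp
  have "S x y = tr2 (\<lambda>u w. - K u w)"
    unfolding S_def K_def by (rule tr2_cong) (simp add: J_skew)
  also have "\<dots> = - tr2 K" unfolding tr2_def by (simp add: sum_negf)
  finally show ?thesis using tK by simp
qed

lemma S_sym: "S y x = S x y"
proof -
  have "S y x = tr2 (\<lambda>u w. g (J w y) (J u x))" unfolding S_def using tr2_sym[OF bil_S] .
  also have "\<dots> = S x y" unfolding S_def by (rule tr2_cong) (simp add: gsym)
  finally show ?thesis .
qed

lemma trA: "tr2 (\<lambda>t s. g (J p t) s) = 0"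
proof (rule tr2_skew)
  show "bilinear (\<lambda>t s. g (J p t) s)" by (rule bilinearI') (simp_all add: lin_simps J_simps)
  fix u w show "g (J p u) w = - g (J p w) u" using J_skew[of p u w] gsym[of "J p w" u] by simp
qed

lemma trB: "tr2 (\<lambda>t s. g (J (br t y) x) s) = - S x y"
proof -
  have pw: "g (J (br t y) x) s = - (\<Sum>d\<in>Basis. g (J (F d) y) t * g s (J d x))" for t s
  proof -
    have "g (J (br t y) x) s = g (br x s) (br t y)" using J_g[of s "br t y" x] gsym by metis
    also have "\<dots> = g (br x s) (\<Sum>d\<in>Basis. g (br t y) (F d) *\<^sub>R d)" by (simp add: C1)
    also have "\<dots> = (\<Sum>d\<in>Basis. g (br t y) (F d) * g (br x s) d)" by (simp add: g_sumR g_scR)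
    also have "\<dots> = (\<Sum>d\<in>Basis. - (g (J (F d) y) t * g s (J d x)))"
    proof (rule sum.cong[OF refl])
      fix d
      have 1: "g (br t y) (F d) = - g (J (F d) y) t"
        using J_g[of y "F d" t] J_skew[of "F d" t y] gsym by metis
      have 2: "g (br x s) d = g s (J d x)" using J_g[of s d x] by simp
      show "g (br t y) (F d) * g (br x s) d = - (g (J (F d) y) t * g s (J d x))" using 1 2 by simp
    qed
    finally show ?thesis by (simp add: sum_negf)
  qed
  have "tr2 (\<lambda>t s. g (J (br t y) x) s) = (\<Sum>b\<in>Basis. - (\<Sum>d\<in>Basis. g (J (F d) y) b * g (F b) (J d x)))"
    unfolding tr2_def using pw by simp
  also have "\<dots> = - (\<Sum>d\<in>Basis. \<Sum>b\<in>Basis. g (J (F d) y) b * g (F b) (J d x))"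
    by (simp only: sum_negf) (rule arg_cong[where f=uminus], rule sum.swap)
  also have "\<dots> = - (\<Sum>d\<in>Basis. g (J d x) (J (F d) y))"
    by (simp only: pair) (simp add: gsym)
  also have "\<dots> = - S x y" unfolding S_def tr2_def ..
  finally show ?thesis .
qed

lemma trC: "tr2 (\<lambda>t s. g (br x (J t y)) s) = S x y"
proof -
  have "tr2 (\<lambda>t s. g (br x (J t y)) s) = tr2 (\<lambda>t s. g (J s x) (J t y))"
    by (rule tr2_cong) (metis J_g gsym)
  also have "\<dots> = S x y" unfolding S_def using tr2_sym[OF bil_S, of x y] by simp
  finally show ?thesis .
qed

lemma ric_VV: assumes "x \<in> V" "y \<in> V" shows "ricci g br x y = - (kappa / 2) * g x y"
proof -
  have "ricci g br x y = tr2 (\<lambda>t s. (- (1/4)) * g (J (br x y) t) s + (1/4) * g (J (br t y) x) s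
      + (1/4) * g (br x (J t y)) s + (1/2) * g (J (br t x) y) s)"
    unfolding ricci_tr using assms by (intro tr2_cong) (simp add: R1 g_addL g_subL g_scL g_negL)
  also have "\<dots> = (1/4) * (- S x y) + (1/4) * S x y + (1/2) * (- S y x)"
    unfolding tr2_lin4 by (simp add: trA trB trC)
  also have "\<dots> = - (kappa / 2) * g x y" using S_sym[of y x] S_eq[OF assms(2), of x] by simp
  finally show ?thesis .
qed


lemma LC_addL: "LC (x + y) w = LC x w + LC y w" using bilinear_ladd[OF bLC] .
lemma LC_addR: "LC w (x + y) = LC w x + LC w y" using bilinear_radd[OF bLC] .
lemma LC_scL: "LC (a *\<^sub>R x) w = a *\<^sub>R LC x w" using bilinear_lmul[OF bLC] .
lemma LC_scR: "LC w (a *\<^sub>R x) = a *\<^sub>R LC w x" using bilinear_rmul[OF bLC] .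

lemma R_addM: "R t (u1 + u2) w = R t u1 w + R t u2 w"
  unfolding curvature_def by (simp add: LC_addL LC_addR br_addR algebra_simps)
lemma R_scM: "R t (a *\<^sub>R u) w = a *\<^sub>R R t u w"
  unfolding curvature_def by (simp add: LC_scL LC_scR br_scR algebra_simps)
lemma R_addW: "R t u (w1 + w2) = R t u w1 + R t u w2"
  unfolding curvature_def by (simp add: LC_addL LC_addR algebra_simps)
lemma R_scW: "R t u (a *\<^sub>R w) = a *\<^sub>R R t u w"
  unfolding curvature_def by (simp add: LC_scL LC_scR algebra_simps)

lemma ric_addL: "ricci g br (u1 + u2) w = ricci g br u1 w + ricci g br u2 w"
  unfolding ricci_tr tr2_def by (simp add: R_addM g_addL sum.distrib)
lemma ric_scL: "ricci g br (a *\<^sub>R u) w = a * ricci g br u w"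
  unfolding ricci_tr tr2_def by (simp add: R_scM g_scL sum_distrib_left)
lemma ric_addR: "ricci g br u (w1 + w2) = ricci g br u w1 + ricci g br u w2"
  unfolding ricci_tr tr2_def by (simp add: R_addW g_addL sum.distrib)
lemma ric_scR: "ricci g br u (a *\<^sub>R w) = a * ricci g br u w"
  unfolding ricci_tr tr2_def by (simp add: R_scW g_scL sum_distrib_left)

abbreviation "RC \<equiv> ricci_op g br"

lemma RC_char: "g (RC u) w = ricci g br u w"
proof -
  have l: "linear (ricci g br u)" by (rule linearI) (simp_all add: ric_addR ric_scR)
  obtain z where z: "\<forall>c. g z c = ricci g br u c"
    using rep_lemma[OF bg subspace_UNIV _ l] gnd by blast
  have "RC u = z" unfolding ricci_op_def
  proof (rule the_equality)
    show "\<forall>w. g z w = ricci g br u w" using z .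
    fix r assume r: "\<forall>w. g r w = ricci g br u w"
    have "g (r - z) w = 0" for w using r z by (simp add: g_subL)
    hence "r - z = 0" by (rule gnd)
    thus "r = z" by simp
  qed
  thus ?thesis using z by simp
qed

lemma RC_unique: "(\<And>w. g r w = ricci g br u w) \<Longrightarrow> RC u = r"
proof -
  assume r: "\<And>w. g r w = ricci g br u w"
  have "g (RC u - r) w = 0" for w using r RC_char by (simp add: g_subL)
  hence "RC u - r = 0" by (rule gnd)
  thus ?thesis by simp
qed

lemma RC_add: "RC (x + y) = RC x + RC y"
  by (rule RC_unique) (simp add: g_addL RC_char ric_addL)
lemma RC_sc: "RC (a *\<^sub>R x) = a *\<^sub>R RC x"
  by (rule RC_unique) (simp add: g_scL RC_char ric_scL)
lemma lin_RC: "linear RC" by (rule linearI) (simp_all add: RC_add RC_sc)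

definition aa where "aa = - (kappa / 2)"

lemma RC_V: "x \<in> V \<Longrightarrow> RC x = aa *\<^sub>R x"
proof (rule RC_unique)
  fix w assume x: "x \<in> V"
  have "ricci g br x w = ricci g br x (P w) + ricci g br x (Q w)"
    using ric_addR[of x "P w" "Q w"] PQ[of w] by simp
  also have "\<dots> = aa * g x (P w)" using ric_VV[OF x P_V] ric_VZ[OF x Q_Z] by (simp add: aa_def)
  also have "\<dots> = g (aa *\<^sub>R x) w" using g_V_left[OF x, of w] by (simp add: g_scL)
  finally show "g (aa *\<^sub>R x) w = ricci g br x w" by simp
qed

lemma RC_Z: assumes c: "c \<in> Z" shows "RC c \<in> Z"
proof -
  have "g (P (RC c)) s = 0" for s
    using g_P_swap[of "RC c" s] RC_char[of c "P s"] ric_ZV[OF c P_V] by simp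
  hence "P (RC c) = 0" by (rule gnd)
  hence "RC c = Q (RC c)" using PQ[of "RC c"] by simp
  thus ?thesis using Q_Z by metis
qed

lemma br_PL: "br (P u) w = br u w"
  using br_P[of "P u" w] br_P[of u w] PP by simp
lemma br_PR: "br w (P u) = br w u"
  using br_P[of w "P u"] br_P[of w u] PP by simp

lemma main: "nilsoliton g br \<longleftrightarrow>
    (\<exists>lam::real. \<forall>w\<in>derived_subspace br V. RC w = lam *\<^sub>R w)"
proof
  assume "nilsoliton g br"
  then obtain c where d: "is_derivation br (\<lambda>u. RC u + c *\<^sub>R u)" unfolding nilsoliton_def by blast
  have gen: "RC (br x y) = (2 * aa + c) *\<^sub>R br x y" if "x \<in> V" "y \<in> V" for x y
  proof -
    have "RC (br x y) + c *\<^sub>R br x y = br (RC x + c *\<^sub>R x) y + br x (RC y + c *\<^sub>R y)"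
      using d unfolding is_derivation_def by blast
    also have "\<dots> = (aa + c) *\<^sub>R br x y + (aa + c) *\<^sub>R br x y"
      using that by (simp add: RC_V br_addL br_addR br_scL br_scR scaleR_add_left)
    finally have e: "RC (br x y) = (aa + c) *\<^sub>R br x y + (aa + c) *\<^sub>R br x y - c *\<^sub>R br x y"
      by (simp add: eq_diff_eq)
    also have "\<dots> = ((aa + c) + (aa + c) - c) *\<^sub>R br x y"
      by (simp only: scaleR_add_left scaleR_diff_left)
    finally show ?thesis by simp
  qed
  have "\<forall>w\<in>derived_subspace br V. RC w = (2 * aa + c) *\<^sub>R w"
  proof
    fix w assume "w \<in> derived_subspace br V"
    thus "RC w = (2 * aa + c) *\<^sub>R w" unfolding derived_subspace_def
    proof (rule span_induct)
      show "subspace {w. RC w = (2 * aa + c) *\<^sub>R w}"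
        unfolding subspace_def by (simp add: RC_add RC_sc linear_0[OF lin_RC] algebra_simps)
      fix x assume "x \<in> {br x y |x y. x \<in> V \<and> y \<in> V}"
      thus "RC x = (2 * aa + c) *\<^sub>R x" using gen by auto
    qed
  qed
  thus "\<exists>lam::real. \<forall>w\<in>derived_subspace br V. RC w = lam *\<^sub>R w" by blast
next
  assume "\<exists>lam::real. \<forall>w\<in>derived_subspace br V. RC w = lam *\<^sub>R w"
  then obtain lam where lam: "\<forall>w\<in>derived_subspace br V. RC w = lam *\<^sub>R w" by blast
  define c where "c = lam - 2 * aa"
  have RCbr: "RC (br u w) = lam *\<^sub>R br u w" for u w
  proof -
    have "br (P u) (P w) \<in> derived_subspace br V"
      unfolding derived_subspace_def by (rule span_base) (auto intro: P_V)
    thus ?thesis using lam br_P[of u w] by simp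
  qed
  have RCu: "RC u = aa *\<^sub>R P u + RC (Q u)" for u
    using RC_add[of "P u" "Q u"] PQ[of u] RC_V[OF P_V] by simp
  have brl: "br (RC u + c *\<^sub>R u) w = (aa + c) *\<^sub>R br u w" for u w
  proof -
    have "br (RC (Q u)) w = 0" using Z_brL[OF RC_Z[OF Q_Z]] .
    thus ?thesis by (simp only: RCu[of u]) (simp add: br_addL br_scL br_PL algebra_simps)
  qed
  have brr: "br u (RC w + c *\<^sub>R w) = (aa + c) *\<^sub>R br u w" for u w
  proof -
    have "br u (RC (Q w)) = 0" using Z_brR[OF RC_Z[OF Q_Z]] .
    thus ?thesis by (simp only: RCu[of w]) (simp add: br_addR br_scR br_PR algebra_simps)
  qed
  have "is_derivation br (\<lambda>u. RC u + c *\<^sub>R u)"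
    unfolding is_derivation_def
  proof (intro conjI allI)
    show "linear (\<lambda>u. RC u + c *\<^sub>R u)"
      by (rule linearI) (simp_all add: RC_add RC_sc algebra_simps)
    fix u w
    show "RC (br u w) + c *\<^sub>R br u w = br (RC u + c *\<^sub>R u) w + br u (RC w + c *\<^sub>R w)"
    proof -
      have co: "lam + c = (aa + c) + (aa + c)" by (simp add: c_def)
      show ?thesis by (simp only: RCbr brl brr scaleR_add_left[symmetric] co)
    qed
  qed
  thus "nilsoliton g br" unfolding nilsoliton_def by blast
qed

end

theorem theorem4p10:
  fixes g :: "'a::euclidean_space \<Rightarrow> 'a \<Rightarrow> real"
    and br :: "'a \<Rightarrow> 'a \<Rightarrow> 'a"
    and phi :: "'a \<Rightarrow> real"
  assumes "modified_H_type g br phi"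
  shows "nilsoliton g br \<longleftrightarrow>
    (\<exists>lam::real. \<forall>w\<in>derived_subspace br (orth_compl g (center br)).
        ricci_op g br w = lam *\<^sub>R w)"
proof -
  interpret mh g br phi using assms by unfold_locales
  show ?thesis by (rule main)
qed

end
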